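(* Let $\Phi:[a,b]\to\mathbb{R}$ be continuous and nowhere zero and let $x_0\in[a,b]$. For $n\ge0$, a fundamental set of solutions (basis of the solution space) of the equation $D^{(n+1)}y(x)=0$ of order $n+1$ is $\mathcal S_n=\{\mathcal Y_0(x_0,x),\dots,\mathcal Y_n(x_0,x)\}$ if $n$ is odd and $\widetilde{\mathcal S}_n=\{\widetilde{\mathcal Y}_0(x_0,x),\dots,\widetilde{\mathcal Y}_n(x_0,x)\}$ if $n$ is even. Moreover, a fundamental set of solutions of $\widetilde D^{(n+1)}y(x)=0$ of order $n+1$ is $\widetilde{\mathcal S}_n$ if $n$ is odd and $\mathcal S_n$ if $n$ is even.
   Context: For $x_0,x\in[a,b]$ the $\Phi$-power functions are defined recursively by $X^{(0)}(x_0,x)\equiv 1$, $\widetilde X^{(0)}(x_0,x)\equiv 1$ and, for $n\ge 1$, $$X^{(n)}(x_0,x)=n\int_{x_0}^x X^{(n-1)}(x_0,\xi)\,\big(\Phi(\xi)\big)^{(-1)^n}\,d\xi,\qquad \widetilde X^{(n)}(x_0,x)=n\int_{x_0}^x \widetilde X^{(n-1)}(x_0,\xi)\,\Big(\frac{1}{\Phi(\xi)}\Big)^{(-1)^n}\,d\xi.$$ For $n\ge0$, $\mathcal Y_n=\widetilde X^{(n)}$ if $n$ is odd and $\mathcal Y_n=X^{(n)}$ if $n$ is even; $\widetilde{\mathcal Y}_n=X^{(n)}$ if $n$ is odd and $\widetilde{\mathcal Y}_n=\widetilde X^{(n)}$ if $n$ is even. The $\Phi$-derivatives are $Dh=\Phi\,h'$,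 $\widetilde Dh=\frac1\Phi h'$, with $D^{(0)}h=\widetilde D^{(0)}h=h$, $D^{(k)}h=D(\widetilde D^{(k-1)}h)$, $\widetilde D^{(k)}h=\widetilde D(D^{(k-1)}h)$. In this part of the paper $\Phi$ is assumed real-valued. *)

theory Defs
  imports "HOL-Analysis.Analysis"
begin

definition sint :: "real \<Rightarrow> real \<Rightarrow> (real \<Rightarrow> real) \<Rightarrow> real" where
  "sint x0 x f = (if x0 \<le> x then integral {x0..x} f else - integral {x..x0} f)"

fun Xpow :: "(real \<Rightarrow> real) \<Rightarrow> real \<Rightarrow> nat \<Rightarrow> real \<Rightarrow> real" where
  "Xpow \<Phi> x0 0 x = 1"
| "Xpow \<Phi> x0 (Suc n) x = real (Suc n) *
     sint x0 x (\<lambda>\<xi>. Xpow \<Phi> x0 n \<xi> * (if odd (Suc n) then inverse (\<Phi> \<xi>) else \<Phi> \<xi>))"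

fun Xtpow :: "(real \<Rightarrow> real) \<Rightarrow> real \<Rightarrow> nat \<Rightarrow> real \<Rightarrow> real" where
  "Xtpow \<Phi> x0 0 x = 1"
| "Xtpow \<Phi> x0 (Suc n) x = real (Suc n) *
     sint x0 x (\<lambda>\<xi>. Xtpow \<Phi> x0 n \<xi> * (if odd (Suc n) then \<Phi> \<xi> else inverse (\<Phi> \<xi>)))"

definition Ypow :: "(real \<Rightarrow> real) \<Rightarrow> real \<Rightarrow> nat \<Rightarrow> real \<Rightarrow> real" where
  "Ypow \<Phi> x0 n = (if odd n then Xtpow \<Phi> x0 n else Xpow \<Phi> x0 n)"

definition Ytpow :: "(real \<Rightarrow> real) \<Rightarrow> real \<Rightarrow> nat \<Rightarrow> real \<Rightarrow> real" where
  "Ytpow \<Phi> x0 n = (if odd n then Xpow \<Phi> x0 n else Xtpow \<Phi> x0 n)"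

text \<open>Iterated Phi-derivatives on the set S (one-sided derivatives at endpoints).
  phiD \<Phi> S False k h = D^(k) h, phiD \<Phi> S True k h = tilde D^(k) h,
  with D h = \<Phi> h' and tilde D h = h' / \<Phi>.\<close>
fun phiD :: "(real \<Rightarrow> real) \<Rightarrow> real set \<Rightarrow> bool \<Rightarrow> nat \<Rightarrow> (real \<Rightarrow> real) \<Rightarrow> real \<Rightarrow> real" where
  "phiD \<Phi> S t 0 h = h"
| "phiD \<Phi> S t (Suc k) h = (\<lambda>x. (if t then inverse (\<Phi> x) else \<Phi> x) *
      vector_derivative (phiD \<Phi> S (\<not> t) k h) (at x within S))"

fun phiDiffable :: "(real \<Rightarrow> real) \<Rightarrow> real set \<Rightarrow> bool \<Rightarrow> nat \<Rightarrow> (real \<Rightarrow> real) \<Rightarrow> bool" where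
  "phiDiffable \<Phi> S t 0 h = True"
| "phiDiffable \<Phi> S t (Suc k) h = (phiDiffable \<Phi> S (\<not> t) k h \<and>
      (\<forall>x\<in>S. phiD \<Phi> S (\<not> t) k h differentiable (at x within S)))"

definition phi_solution :: "(real \<Rightarrow> real) \<Rightarrow> real set \<Rightarrow> bool \<Rightarrow> nat \<Rightarrow> (real \<Rightarrow> real) \<Rightarrow> bool" where
  "phi_solution \<Phi> S t m y \<longleftrightarrow> phiDiffable \<Phi> S t m y \<and> (\<forall>x\<in>S. phiD \<Phi> S t m y x = 0)"

definition fundamental_set :: "real set \<Rightarrow> ((real \<Rightarrow> real) \<Rightarrow> bool) \<Rightarrow> nat \<Rightarrow> (nat \<Rightarrow> real \<Rightarrow> real) \<Rightarrow> bool" where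
  "fundamental_set S sol n Y \<longleftrightarrow>
     (\<forall>i\<le>n. sol (Y i)) \<and>
     (\<forall>c::nat \<Rightarrow> real. (\<forall>x\<in>S. (\<Sum>i\<le>n. c i * Y i x) = 0) \<longrightarrow> (\<forall>i\<le>n. c i = 0)) \<and>
     (\<forall>y. sol y \<longrightarrow> (\<exists>c::nat \<Rightarrow> real. \<forall>x\<in>S. y x = (\<Sum>i\<le>n. c i * Y i x)))"

end

theory Submission
  imports Defs
begin

lemma vd_transfer:
  assumes "x \<in> S" "\<forall>y\<in>S. f y = g y" "(g has_vector_derivative g') (at x within S)"
  shows "(f has_vector_derivative g') (at x within S)"
  using has_vector_derivative_transform_within[OF assms(3), of 1 f] assms(1,2) by auto

lemma vd_const_on:
  assumes "x \<in> S" "\<forall>y\<in>S. f y = c"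
  shows "(f has_vector_derivative 0) (at x within S)"
  using vd_transfer[OF assms(1), of f "\<lambda>_. c"] assms(2) by auto

lemma sint_eq:
  assumes "continuous_on {a..b} f" "x0 \<in> {a..b}" "x \<in> {a..b}"
  shows "sint x0 x f = integral {a..x} f - integral {a..x0} f"
proof -
  have int: "f integrable_on {a..b}" using assms(1) integrable_continuous_real by blast
  show ?thesis
  proof (cases "x0 \<le> x")
    case True
    have "f integrable_on {a..x}" using int assms(3) integrable_subinterval_real by fastforce
    then have "integral {a..x0} f + integral {x0..x} f = integral {a..x} f"
      using Henstock_Kurzweil_Integration.integral_combine[of a x0 x f] True assms by auto
    then show ?thesis using True by (simp add: sint_def)
  next
    case False
    have "f integrable_on {a..x0}" using int assms(2) integrable_subinterval_real by fastforce
    then have "integral {a..x} f + integral {x..x0} f = integral {a..x0} f"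
      using Henstock_Kurzweil_Integration.integral_combine[of a x x0 f] False assms by auto
    then show ?thesis using False by (simp add: sint_def)
  qed
qed

lemma sint_deriv:
  assumes "continuous_on {a..b} f" "x0 \<in> {a..b}" "x \<in> {a..b}"
  shows "((\<lambda>x. sint x0 x f) has_vector_derivative f x) (at x within {a..b})"
proof -
  have "((\<lambda>u. integral {a..u} f - integral {a..x0} f) has_vector_derivative f x - 0) (at x within {a..b})"
    by (intro derivative_intros integral_has_vector_derivative assms)
  then have d: "((\<lambda>u. integral {a..u} f - integral {a..x0} f) has_vector_derivative f x) (at x within {a..b})"
    by simp
  show ?thesis by (rule vd_transfer[OF assms(3) _ d]) (auto simp: sint_eq[OF assms(1,2)])
qed

locale phictx =
  fixes \<Phi> :: "real \<Rightarrow> real" and a b x0 :: real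
  assumes ab: "a < b"
    and cont: "continuous_on {a..b} \<Phi>"
    and nz: "\<forall>x\<in>{a..b}. \<Phi> x \<noteq> 0"
    and x0: "x0 \<in> {a..b}"
begin

definition mm :: "bool \<Rightarrow> real \<Rightarrow> real" where
  "mm t x = (if t then inverse (\<Phi> x) else \<Phi> x)"

definition G :: "bool \<Rightarrow> nat \<Rightarrow> real \<Rightarrow> real" where
  "G u i = (if u then Ypow \<Phi> x0 i else Ytpow \<Phi> x0 i)"

lemma mm_cont: "continuous_on {a..b} (mm t)"
  using cont nz unfolding mm_def by (cases t) (auto intro!: continuous_on_inverse)

lemma mm_mult: "x \<in> {a..b} \<Longrightarrow> mm t x * mm (\<not> t) x = 1"
  using nz unfolding mm_def by (cases t) auto

lemma mm_nz: "x \<in> {a..b} \<Longrightarrow> mm t x \<noteq> 0"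
  using nz unfolding mm_def by (cases t) auto

lemma Xpow_Suc_eq: "Xpow \<Phi> x0 (Suc i) = (\<lambda>x. real (Suc i) * sint x0 x (\<lambda>\<xi>. Xpow \<Phi> x0 i \<xi> * mm (even i) \<xi>))"
  by (cases "even i") (simp_all add: mm_def fun_eq_iff del: of_nat_Suc)

lemma Xtpow_Suc_eq: "Xtpow \<Phi> x0 (Suc i) = (\<lambda>x. real (Suc i) * sint x0 x (\<lambda>\<xi>. Xtpow \<Phi> x0 i \<xi> * mm (odd i) \<xi>))"
  by (cases "even i") (simp_all add: mm_def fun_eq_iff del: of_nat_Suc)

lemma Xpow_d:
  assumes "continuous_on {a..b} (Xpow \<Phi> x0 i)" "x \<in> {a..b}"
  shows "(Xpow \<Phi> x0 (Suc i) has_vector_derivative real (Suc i) * (Xpow \<Phi> x0 i x * mm (even i) x)) (at x within {a..b})"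
proof -
  have c: "continuous_on {a..b} (\<lambda>\<xi>. Xpow \<Phi> x0 i \<xi> * mm (even i) \<xi>)"
    using assms(1) mm_cont by (intro continuous_on_mult) auto
  show ?thesis unfolding Xpow_Suc_eq
    by (intro has_vector_derivative_mult_right sint_deriv[OF c x0 assms(2)])
qed

lemma Xtpow_d:
  assumes "continuous_on {a..b} (Xtpow \<Phi> x0 i)" "x \<in> {a..b}"
  shows "(Xtpow \<Phi> x0 (Suc i) has_vector_derivative real (Suc i) * (Xtpow \<Phi> x0 i x * mm (odd i) x)) (at x within {a..b})"
proof -
  have c: "continuous_on {a..b} (\<lambda>\<xi>. Xtpow \<Phi> x0 i \<xi> * mm (odd i) \<xi>)"
    using assms(1) mm_cont by (intro continuous_on_mult) auto
  show ?thesis unfolding Xtpow_Suc_eq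
    by (intro has_vector_derivative_mult_right sint_deriv[OF c x0 assms(2)])
qed

lemma X_cont: "continuous_on {a..b} (Xpow \<Phi> x0 i) \<and> continuous_on {a..b} (Xtpow \<Phi> x0 i)"
proof (induction i)
  case 0
  then show ?case by simp
next
  case (Suc i)
  have "continuous_on {a..b} (Xpow \<Phi> x0 (Suc i))"
    unfolding continuous_on_eq_continuous_within
    using Xpow_d[OF conjunct1[OF Suc]] has_vector_derivative_continuous by blast
  moreover have "continuous_on {a..b} (Xtpow \<Phi> x0 (Suc i))"
    unfolding continuous_on_eq_continuous_within
    using Xtpow_d[OF conjunct2[OF Suc]] has_vector_derivative_continuous by blast
  ultimately show ?case by blast
qed

lemma G0: "G u 0 = (\<lambda>x. 1)"
  by (auto simp: G_def Ypow_def Ytpow_def fun_eq_iff)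

lemma G_d:
  assumes "x \<in> {a..b}"
  shows "(G t (Suc i) has_vector_derivative real (Suc i) * (G (\<not> t) i x * mm (\<not> t) x)) (at x within {a..b})"
  using Xpow_d[OF conjunct1[OF X_cont] assms, of i] Xtpow_d[OF conjunct2[OF X_cont] assms, of i]
  by (cases t; cases "even i") (auto simp: G_def Ypow_def Ytpow_def)

lemma G_cont: "continuous_on {a..b} (G t i)"
  using X_cont by (auto simp: G_def Ypow_def Ytpow_def)

lemma hvd_iff:
  assumes "x \<in> S" "\<forall>y\<in>S. f y = g y"
  shows "(f has_vector_derivative d) (at x within S) \<longleftrightarrow> (g has_vector_derivative d) (at x within S)"
  using vd_transfer[OF assms(1), of f g d] vd_transfer[OF assms(1), of g f d] assms(2) by auto

lemma vd_eq:
  assumes "x \<in> {a..b}" "(f has_vector_derivative d) (at x within {a..b})"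
  shows "vector_derivative f (at x within {a..b}) = d"
  using vector_derivative_within_cbox[of a b x f d] assms ab by (simp add: cbox_interval)

lemma pD_Suc: "phiD \<Phi> {a..b} t (Suc k) h x = mm t x * vector_derivative (phiD \<Phi> {a..b} (\<not> t) k h) (at x within {a..b})"
  by (simp add: mm_def)

lemma step:
  assumes "phiDiffable \<Phi> {a..b} (\<not> t) k h"
    and "\<forall>y\<in>{a..b}. phiD \<Phi> {a..b} (\<not> t) k h y = g y"
    and "\<And>x. x \<in> {a..b} \<Longrightarrow> (g has_vector_derivative g' x) (at x within {a..b})"
  shows "phiDiffable \<Phi> {a..b} t (Suc k) h \<and> (\<forall>x\<in>{a..b}. phiD \<Phi> {a..b} t (Suc k) h x = mm t x * g' x)"
proof -
  have d: "(phiD \<Phi> {a..b} (\<not> t) k h has_vector_derivative g' x) (at x within {a..b})" if "x \<in> {a..b}" for x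
    using vd_transfer[OF that assms(2) assms(3)[OF that]] .
  have "phiDiffable \<Phi> {a..b} t (Suc k) h"
    using assms(1) d differentiableI_vector by (simp del: atLeastAtMost_iff) blast
  moreover have "phiD \<Phi> {a..b} t (Suc k) h x = mm t x * g' x" if x: "x \<in> {a..b}" for x
    unfolding pD_Suc using vd_eq[OF x d[OF x]] by simp
  ultimately show ?thesis by blast
qed

lemma phiD_cong:
  assumes "\<forall>x\<in>{a..b}. f x = g x"
  shows "(phiDiffable \<Phi> {a..b} t k f \<longleftrightarrow> phiDiffable \<Phi> {a..b} t k g) \<and>
         (\<forall>x\<in>{a..b}. phiD \<Phi> {a..b} t k f x = phiD \<Phi> {a..b} t k g x)"
proof (induction k arbitrary: t)
  case 0
  then show ?case using assms by simp
next
  case (Suc k)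
  note IH = Suc[of "\<not> t"]
  have e: "\<forall>y\<in>{a..b}. phiD \<Phi> {a..b} (\<not> t) k f y = phiD \<Phi> {a..b} (\<not> t) k g y"
    using IH by blast
  have dif: "phiD \<Phi> {a..b} (\<not> t) k f differentiable (at x within {a..b}) \<longleftrightarrow>
             phiD \<Phi> {a..b} (\<not> t) k g differentiable (at x within {a..b})" if "x \<in> {a..b}" for x
    using hvd_iff[OF that e] vector_derivative_works differentiableI_vector by metis
  have vd: "vector_derivative (phiD \<Phi> {a..b} (\<not> t) k f) (at x within {a..b}) =
            vector_derivative (phiD \<Phi> {a..b} (\<not> t) k g) (at x within {a..b})" if "x \<in> {a..b}" for x
    unfolding vector_derivative_def using hvd_iff[OF that e] by simp
  show ?case using IH dif vd by (auto simp: pD_Suc simp del: phiD.simps)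
qed

lemma lin:
  assumes "finite I"
  shows "(\<forall>i\<in>I. phiDiffable \<Phi> {a..b} s k (g i)) \<Longrightarrow>
    phiDiffable \<Phi> {a..b} s k (\<lambda>x. \<Sum>i\<in>I. c i * g i x) \<and>
    (\<forall>x\<in>{a..b}. phiD \<Phi> {a..b} s k (\<lambda>x. \<Sum>i\<in>I. c i * g i x) x = (\<Sum>i\<in>I. c i * phiD \<Phi> {a..b} s k (g i) x))"
proof (induction k arbitrary: s)
  case 0
  then show ?case by simp
next
  case (Suc k)
  have hyp: "\<forall>i\<in>I. phiDiffable \<Phi> {a..b} (\<not> s) k (g i)" using Suc.prems by simp
  note IH = Suc.IH[OF hyp]
  define vdi where "vdi i x = vector_derivative (phiD \<Phi> {a..b} (\<not> s) k (g i)) (at x within {a..b})" for i x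
  have hv: "(phiD \<Phi> {a..b} (\<not> s) k (g i) has_vector_derivative vdi i x) (at x within {a..b})"
    if "i \<in> I" "x \<in> {a..b}" for i x
    using Suc.prems that unfolding vdi_def by (auto simp: vector_derivative_works[symmetric])
  have hs: "((\<lambda>x. \<Sum>i\<in>I. c i * phiD \<Phi> {a..b} (\<not> s) k (g i) x) has_vector_derivative
        (\<Sum>i\<in>I. c i * vdi i x)) (at x within {a..b})" if "x \<in> {a..b}" for x
    by (intro has_vector_derivative_sum has_vector_derivative_mult_right hv that)
  from step[OF conjunct1[OF IH] conjunct2[OF IH] hs]
  have st: "phiDiffable \<Phi> {a..b} s (Suc k) (\<lambda>x. \<Sum>i\<in>I. c i * g i x) \<and>
    (\<forall>x\<in>{a..b}. phiD \<Phi> {a..b} s (Suc k) (\<lambda>x. \<Sum>i\<in>I. c i * g i x) x = mm s x * (\<Sum>i\<in>I. c i * vdi i x))" .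
  have "phiD \<Phi> {a..b} s (Suc k) (g i) x = mm s x * vdi i x" for i x
    unfolding vdi_def pD_Suc ..
  then show ?case using st by (auto simp: sum_distrib_left mult.left_commute simp del: phiD.simps)
qed

definition ff :: "nat \<Rightarrow> nat \<Rightarrow> real" where
  "ff k i = (\<Prod>j<k. real (i - j))"

lemma ff_nz: "ff k k \<noteq> 0"
  unfolding ff_def by (auto)

lemma chain:
  "k \<le> i \<Longrightarrow> u = (t = odd k) \<Longrightarrow> phiDiffable \<Phi> {a..b} t k (G u i) \<and>
     (\<forall>x\<in>{a..b}. phiD \<Phi> {a..b} t k (G u i) x = ff k i * G (\<not> t) (i - k) x)"
proof (induction k arbitrary: t)
  case 0
  then show ?case by (simp add: ff_def)
next
  case (Suc k)
  have u: "u = ((\<not> t) = odd k)" using Suc.prems by simp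
  note IH = Suc.IH[OF _ u] 
  have IH': "phiDiffable \<Phi> {a..b} (\<not> t) k (G u i) \<and>
     (\<forall>x\<in>{a..b}. phiD \<Phi> {a..b} (\<not> t) k (G u i) x = ff k i * G t (Suc (i - Suc k)) x)"
    using IH Suc.prems Suc_diff_Suc[of k i] by auto
  have hs: "((\<lambda>x. ff k i * G t (Suc (i - Suc k)) x) has_vector_derivative
      ff k i * (real (Suc (i - Suc k)) * (G (\<not> t) (i - Suc k) x * mm (\<not> t) x))) (at x within {a..b})"
    if "x \<in> {a..b}" for x
    by (intro has_vector_derivative_mult_right G_d that)
  from step[OF conjunct1[OF IH'] conjunct2[OF IH'] hs]
  have st: "phiDiffable \<Phi> {a..b} t (Suc k) (G u i) \<and>
    (\<forall>x\<in>{a..b}. phiD \<Phi> {a..b} t (Suc k) (G u i) x = mm t x * (ff k i * (real (Suc (i - Suc k)) * (G (\<not> t) (i - Suc k) x * mm (\<not> t) x))))" .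
  have ffs: "ff (Suc k) i = ff k i * real (Suc (i - Suc k))"
    using Suc.prems Suc_diff_Suc[of k i] by (simp add: ff_def)
  have "mm t x * (ff k i * (real (Suc (i - Suc k)) * (G (\<not> t) (i - Suc k) x * mm (\<not> t) x)))
      = ff (Suc k) i * G (\<not> t) (i - Suc k) x" if "x \<in> {a..b}" for x
  proof -
    have "mm t x * (ff k i * (real (Suc (i - Suc k)) * (G (\<not> t) (i - Suc k) x * mm (\<not> t) x)))
      = ff k i * real (Suc (i - Suc k)) * G (\<not> t) (i - Suc k) x * (mm t x * mm (\<not> t) x)"
      by (simp only: mult_ac)
    also have "\<dots> = ff (Suc k) i * G (\<not> t) (i - Suc k) x"
      using mm_mult[OF that, of t] unfolding ffs by simp
    finally show ?thesis .
  qed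
  then show ?case using st by (simp del: phiD.simps)
qed

lemma zero:
  "i < k \<Longrightarrow> u = (t = odd k) \<Longrightarrow> phiDiffable \<Phi> {a..b} t k (G u i) \<and>
     (\<forall>x\<in>{a..b}. phiD \<Phi> {a..b} t k (G u i) x = 0)"
proof (induction k arbitrary: t)
  case 0
  then show ?case by simp
next
  case (Suc k)
  have u: "u = ((\<not> t) = odd k)" using Suc.prems by simp
  show ?case
  proof (cases "i = k")
    case True
    have c: "phiDiffable \<Phi> {a..b} (\<not> t) k (G u i) \<and>
      (\<forall>x\<in>{a..b}. phiD \<Phi> {a..b} (\<not> t) k (G u i) x = ff k i)"
      using chain[OF _ u, of i] True by (simp add: G0)
    have "((\<lambda>x. ff k i) has_vector_derivative 0) (at x within {a..b})" for x
      by (rule has_vector_derivative_const)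
    from step[OF conjunct1[OF c] conjunct2[OF c] this] show ?thesis by simp
  next
    case False
    then have "i < k" using Suc.prems by simp
    note c = Suc.IH[OF this u]
    have "((\<lambda>x. 0) has_vector_derivative 0) (at x within {a..b})" for x
      by (rule has_vector_derivative_const)
    from step[OF conjunct1[OF c] conjunct2[OF c] this] show ?thesis by simp
  qed
qed

lemma span:
  "phiDiffable \<Phi> {a..b} t m y \<Longrightarrow> (\<forall>x\<in>{a..b}. phiD \<Phi> {a..b} t m y x = 0) \<Longrightarrow>
   \<exists>c. \<forall>x\<in>{a..b}. y x = (\<Sum>i<m. c i * G (t = odd m) i x)"
proof (induction m arbitrary: t y)
  case 0
  then show ?case by simp
next
  case (Suc k)
  define u where "u = (t = odd (Suc k))"
  have u: "u = ((\<not> t) = odd k)" unfolding u_def by simp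
  define z where "z = phiD \<Phi> {a..b} (\<not> t) k y"
  have pdy: "phiDiffable \<Phi> {a..b} (\<not> t) k y" using Suc.prems(1) by simp
  have "(z has_field_derivative 0) (at x within {a..b})" if x: "x \<in> {a..b}" for x
  proof -
    have "z differentiable (at x within {a..b})" using Suc.prems(1) x unfolding z_def by simp
    then have h: "(z has_vector_derivative vector_derivative z (at x within {a..b})) (at x within {a..b})"
      using vector_derivative_works by blast
    have "mm t x * vector_derivative z (at x within {a..b}) = 0"
      using Suc.prems(2) x unfolding z_def pD_Suc by blast
    then have "vector_derivative z (at x within {a..b}) = 0" using mm_nz[OF x] by simp
    then show ?thesis using h by (simp add: has_real_derivative_iff_has_vector_derivative)
  qed
  then obtain C where C: "\<forall>x\<in>{a..b}. z x = C"
    using has_field_derivative_zero_constant[of "{a..b}" z] by auto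
  define d where "d = C / ff k k"
  define gg where "gg i = (if i = (0::nat) then y else G u k)" for i
  define cc where "cc i = (if i = (0::nat) then 1 else - d)" for i
  define w where "w = (\<lambda>x. \<Sum>i\<in>{0,1::nat}. cc i * gg i x)"
  have w_eq: "w x = y x - d * G u k x" for x
    unfolding w_def cc_def gg_def by simp
  have ch: "phiDiffable \<Phi> {a..b} (\<not> t) k (G u k) \<and>
      (\<forall>x\<in>{a..b}. phiD \<Phi> {a..b} (\<not> t) k (G u k) x = ff k k)"
    using chain[OF _ u, of k] by (simp add: G0)
  have L: "phiDiffable \<Phi> {a..b} (\<not> t) k w \<and>
    (\<forall>x\<in>{a..b}. phiD \<Phi> {a..b} (\<not> t) k w x = (\<Sum>i\<in>{0,1::nat}. cc i * phiD \<Phi> {a..b} (\<not> t) k (gg i) x))"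
    unfolding w_def by (rule lin) (use pdy ch in \<open>auto simp: gg_def\<close>)
  have w0: "\<forall>x\<in>{a..b}. phiD \<Phi> {a..b} (\<not> t) k w x = 0"
  proof
    fix x assume x: "x \<in> {a..b}"
    have "phiD \<Phi> {a..b} (\<not> t) k w x = z x - d * ff k k"
      using L ch x unfolding cc_def gg_def z_def by simp
    also have "\<dots> = 0" using C x ff_nz unfolding d_def by simp
    finally show "phiD \<Phi> {a..b} (\<not> t) k w x = 0" .
  qed
  obtain c where c: "\<forall>x\<in>{a..b}. w x = (\<Sum>i<k. c i * G u i x)"
    using Suc.IH[OF conjunct1[OF L] w0] u by auto
  show ?case
  proof (intro exI[of _ "c(k := d)"] ballI)
    fix x assume x: "x \<in> {a..b}"
    have "(\<Sum>i<k. (c(k := d)) i * G u i x) = (\<Sum>i<k. c i * G u i x)"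
      by (rule sum.cong) auto
    then show "y x = (\<Sum>i<Suc k. (c(k := d)) i * G (t = odd (Suc k)) i x)"
      using c x w_eq[of x] unfolding u_def[symmetric] by simp
  qed
qed

lemma top:
  assumes "\<forall>x\<in>{a..b}. (\<Sum>i\<le>n. c i * G u i x) = 0"
  shows "c n = 0"
proof -
  define s where "s = (u = odd n)"
  have u: "u = (s = odd n)" unfolding s_def by auto
  have pd: "\<forall>i\<in>{..n}. phiDiffable \<Phi> {a..b} s n (G u i)"
  proof
    fix i assume "i \<in> {..n}"
    then consider "i < n" | "i = n" by fastforce
    then show "phiDiffable \<Phi> {a..b} s n (G u i)"
      using zero[OF _ u, of i] chain[OF _ u, of i] by cases auto
  qed
  note L = lin[OF _ pd, of c, simplified]
  have E: "phiDiffable \<Phi> {a..b} s n (\<lambda>x. \<Sum>i\<in>{}. c i * G u i x) \<and>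
    (\<forall>x\<in>{a..b}. phiD \<Phi> {a..b} s n (\<lambda>x. \<Sum>i\<in>{}. c i * G u i x) x = 0)"
    using lin[of "{}" s n "G u" c] by simp
  have cg: "\<forall>x\<in>{a..b}. phiD \<Phi> {a..b} s n (\<lambda>x. \<Sum>i\<le>n. c i * G u i x) x =
      phiD \<Phi> {a..b} s n (\<lambda>x. \<Sum>i\<in>{}. c i * G u i x) x"
    using phiD_cong[of "\<lambda>x. \<Sum>i\<le>n. c i * G u i x" "\<lambda>x. \<Sum>i\<in>{}. c i * G u i x" s n] assms by simp
  have ax: "a \<in> {a..b}" using ab by simp
  have "0 = (\<Sum>i\<le>n. c i * phiD \<Phi> {a..b} s n (G u i) a)"
    using L cg E ax by simp
  also have "\<dots> = (\<Sum>i<n. c i * phiD \<Phi> {a..b} s n (G u i) a) + c n * phiD \<Phi> {a..b} s n (G u n) a"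
    by (simp add: lessThan_Suc_atMost[symmetric])
  also have "(\<Sum>i<n. c i * phiD \<Phi> {a..b} s n (G u i) a) = 0"
    using zero[OF _ u] ax by simp
  also have "phiD \<Phi> {a..b} s n (G u n) a = ff n n"
    using chain[OF _ u, of n] ax by (simp add: G0)
  finally show ?thesis using ff_nz by simp
qed

lemma indep:
  "\<forall>x\<in>{a..b}. (\<Sum>i\<le>n. c i * G u i x) = 0 \<Longrightarrow> \<forall>i\<le>n. c i = 0"
proof (induction n)
  case 0
  then show ?case using top[OF 0] by simp
next
  case (Suc n)
  have cn: "c (Suc n) = 0" using top[OF Suc.prems] .
  then have "\<forall>x\<in>{a..b}. (\<Sum>i\<le>n. c i * G u i x) = 0" using Suc.prems by simp
  then show ?case using Suc.IH cn le_Suc_eq by auto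
qed

lemma fund:
  "fundamental_set {a..b} (phi_solution \<Phi> {a..b} t (Suc n)) n (G (t = odd (Suc n)))"
proof -
  have A: "\<forall>i\<le>n. phi_solution \<Phi> {a..b} t (Suc n) (G (t = odd (Suc n)) i)"
    unfolding phi_solution_def using zero[of _ "Suc n" "t = odd (Suc n)" t] by simp
  have B: "\<forall>c::nat\<Rightarrow>real. (\<forall>x\<in>{a..b}. (\<Sum>i\<le>n. c i * G (t = odd (Suc n)) i x) = 0) \<longrightarrow> (\<forall>i\<le>n. c i = 0)"
    using indep by blast
  have C: "\<forall>y. phi_solution \<Phi> {a..b} t (Suc n) y \<longrightarrow>
      (\<exists>c::nat\<Rightarrow>real. \<forall>x\<in>{a..b}. y x = (\<Sum>i\<le>n. c i * G (t = odd (Suc n)) i x))"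
    unfolding phi_solution_def using span[of t "Suc n"] by (simp add: lessThan_Suc_atMost)
  show ?thesis unfolding fundamental_set_def using A B C by blast
qed

end

theorem proposition3:
  fixes \<Phi> :: "real \<Rightarrow> real" and a b x0 :: real and n :: nat
  assumes "a < b"
    and "continuous_on {a..b} \<Phi>"
    and "\<forall>x\<in>{a..b}. \<Phi> x \<noteq> 0"
    and "x0 \<in> {a..b}"
  shows "fundamental_set {a..b} (phi_solution \<Phi> {a..b} False (Suc n)) n
           (\<lambda>i. if odd n then Ypow \<Phi> x0 i else Ytpow \<Phi> x0 i)
       \<and> fundamental_set {a..b} (phi_solution \<Phi> {a..b} True (Suc n)) n
           (\<lambda>i. if odd n then Ytpow \<Phi> x0 i else Ypow \<Phi> x0 i)"
proof -
  interpret phictx \<Phi> a b x0 using assms by unfold_locales auto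
  have e1: "G (False = odd (Suc n)) = (\<lambda>i. if odd n then Ypow \<Phi> x0 i else Ytpow \<Phi> x0 i)"
    by (auto simp: G_def fun_eq_iff)
  have e2: "G (True = odd (Suc n)) = (\<lambda>i. if odd n then Ytpow \<Phi> x0 i else Ypow \<Phi> x0 i)"
    by (auto simp: G_def fun_eq_iff)
  show ?thesis using fund[of False n] fund[of True n] unfolding e1 e2 by blast
qed

end
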